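(* For any $k\ge1$ and any $k$-dimensional convex polytope $P$ that has an insphere, letting $x$ be the radius of the insphere, for every integer $n\ge1$ we have $Disp(n;P)=\frac{2x\,DP(n;P)}{x+DP(n;P)}$.
   Context: A $k$-dimensional convex polytope has an insphere if the largest ball contained in $P$ is tangent to all facets of $P$. Distances are Euclidean. $Disp(n;P)=\max_{X_1,\dots,X_n\in P}\min\{dis(X_i,\partial P),dis(X_i,X_j):i\ne j\}$. For $r\ge0$, $Pack(r;P)$ is the maximum number of pairwise non-overlapping balls of radius $r$ contained in $P$, and $DP(n;P)=\max\{r:Pack(r;P)\ge n\}$. *)

theory Defs
  imports "HOL-Analysis.Analysis" "HOL-Library.Extended_Nat"
begin

definition has_insphere :: "'a::euclidean_space set \<Rightarrow> real \<Rightarrow> bool" where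
  "has_insphere P x \<longleftrightarrow>
     (\<exists>c. cball c x \<subseteq> P
        \<and> (\<forall>c' r. cball c' r \<subseteq> P \<longrightarrow> r \<le> x)
        \<and> (\<forall>F. F facet_of P \<longrightarrow> cball c x \<inter> F \<noteq> {}))"

definition Disp :: "nat \<Rightarrow> 'a::euclidean_space set \<Rightarrow> real" where
  "Disp n P = Sup {Min ({infdist (X i) (frontier P) | i. i < n}
                       \<union> {dist (X i) (X j) | i j. i < n \<and> j < n \<and> i \<noteq> j})
                   | X. \<forall>i<n. X i \<in> P}"

definition Pack :: "real \<Rightarrow> 'a::euclidean_space set \<Rightarrow> enat" where
  "Pack r P = Sup {enat (card C) | C. finite C \<and> (\<forall>c\<in>C. cball c r \<subseteq> P)
                     \<and> (\<forall>c\<in>C. \<forall>d\<in>C. c \<noteq> d \<longrightarrow> ball c r \<inter> ball d r = {})}"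

definition DP :: "nat \<Rightarrow> 'a::euclidean_space set \<Rightarrow> real" where
  "DP n P = Sup {r. r \<ge> 0 \<and> Pack r P \<ge> enat n}"

end

theory Submission
  imports Defs
begin


lemma disj_dist:
  fixes a b :: "'a::euclidean_space"
  assumes "ball a r \<inter> ball b r = {}" "r \<ge> 0"
  shows "2*r \<le> dist a b"
proof (rule ccontr)
  assume "\<not> 2*r \<le> dist a b"
  then have "midpoint a b \<in> ball a r" "midpoint a b \<in> ball b r"
    by (auto simp: dist_midpoint)
  with assms show False by blast
qed

lemma dist_disj:
  fixes a b :: "'a::euclidean_space"
  assumes "2*r \<le> dist a b"
  shows "ball a r \<inter> ball b r = {}"
  using assms dist_triangle[of a b] by (auto simp: dist_commute) (smt (verit) dist_commute dist_triangle)

lemma geom: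
  fixes P :: "'a::euclidean_space set" and A :: "'i \<Rightarrow> 'a" and B :: "'i \<Rightarrow> real"
  assumes fin: "finite I"
    and Peq: "P = {y. \<forall>i\<in>I. A i \<bullet> y \<le> B i}"
    and nA0: "\<forall>i\<in>I. norm (A i) = 1"
    and tan0: "\<forall>i\<in>I. B i - A i \<bullet> c = x"
    and xpos: "x > 0"
    and cb: "cball c x \<subseteq> P"
    and maxr0: "\<forall>c' r. cball c' r \<subseteq> P \<longrightarrow> r \<le> x"
    and G_def: "\<And>t p. G t p \<longleftrightarrow> (\<forall>i\<in>I. A i \<bullet> p + t \<le> B i)"
  shows GP: "\<And>t p. G t p \<Longrightarrow> t \<ge> 0 \<Longrightarrow> p \<in> P"
    and Gball: "\<And>r p. G r p \<Longrightarrow> cball p r \<subseteq> P"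
    and ballG: "\<And>r p. cball p r \<subseteq> P \<Longrightarrow> r \<ge> 0 \<Longrightarrow> G r p"
    and hom: "\<And>t p \<mu>. G t p \<Longrightarrow> \<mu> \<ge> 0 \<Longrightarrow> G (\<mu> * t + (1 - \<mu>) * x) (c + \<mu> *\<^sub>R (p - c))"
    and F1: "\<And>t p. G t p \<Longrightarrow> t \<le> infdist p (frontier P)"
    and F2: "\<And>t p. p \<in> P \<Longrightarrow> t \<le> infdist p (frontier P) \<Longrightarrow> G t p"
proof -
  have nA: "\<And>i. i \<in> I \<Longrightarrow> norm (A i) = 1" using nA0 by blast
  have tan: "\<And>i. i \<in> I \<Longrightarrow> B i - A i \<bullet> c = x" using tan0 by blast
  have maxr: "\<And>c' r. cball c' r \<subseteq> P \<Longrightarrow> r \<le> x" using maxr0 by blast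
  show GP: "\<And>t p. G t p \<Longrightarrow> t \<ge> 0 \<Longrightarrow> p \<in> P"
    unfolding Peq G_def by fastforce
  show Gball: "\<And>r p. G r p \<Longrightarrow> cball p r \<subseteq> P"
  proof
    fix r p z assume G: "G r p" and z: "z \<in> cball p r"
    show "z \<in> P" unfolding Peq
    proof (intro CollectI ballI)
      fix i assume i: "i \<in> I"
      have "A i \<bullet> (z - p) \<le> norm (A i) * norm (z - p)" by (rule norm_cauchy_schwarz)
      also have "\<dots> \<le> r" using nA[OF i] z by (simp add: dist_norm norm_minus_commute)
      finally show "A i \<bullet> z \<le> B i" using G i by (simp add: G_def inner_diff_right) (smt (verit))
    qed
  qed
  show ballG: "\<And>r p. cball p r \<subseteq> P \<Longrightarrow> r \<ge> 0 \<Longrightarrow> G r p"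
  proof -
    fix r p assume sub: "cball p r \<subseteq> P" and r: "r \<ge> 0"
    show "G r p" unfolding G_def
    proof
      fix i assume i: "i \<in> I"
      have "p + r *\<^sub>R A i \<in> cball p r" using nA[OF i] r by (simp add: dist_norm)
      then have "A i \<bullet> (p + r *\<^sub>R A i) \<le> B i" using sub i Peq by blast
      moreover have "A i \<bullet> A i = 1" using nA[OF i] by (metis norm_eq_sqrt_inner real_sqrt_eq_1_iff)
      ultimately show "A i \<bullet> p + r \<le> B i" by (simp add: inner_add_right)
    qed
  qed
  show hom: "\<And>t p \<mu>. G t p \<Longrightarrow> \<mu> \<ge> 0 \<Longrightarrow> G (\<mu> * t + (1 - \<mu>) * x) (c + \<mu> *\<^sub>R (p - c))"
  proof -
    fix t p \<mu> assume G: "G t p" and mu: "\<mu> \<ge> (0::real)"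
    show "G (\<mu> * t + (1 - \<mu>) * x) (c + \<mu> *\<^sub>R (p - c))" unfolding G_def
    proof
      fix i assume i: "i \<in> I"
      have "A i \<bullet> p \<le> B i - t" using G i G_def by fastforce
      then have "\<mu> * (A i \<bullet> p) \<le> \<mu> * (B i - t)" using mu by (rule mult_left_mono)
      moreover have "A i \<bullet> c = B i - x" using tan[OF i] by simp
      moreover have "\<mu> * (A i \<bullet> c) = \<mu> * (B i - x)" using tan[OF i] by simp
      ultimately show "A i \<bullet> (c + \<mu> *\<^sub>R (p - c)) + (\<mu> * t + (1 - \<mu>) * x) \<le> B i"
        by (simp add: inner_add_right inner_diff_right algebra_simps)
    qed
  qed
  have clP: "closed P"
  proof -
    have "P = (\<Inter>i\<in>I. {y. A i \<bullet> y \<le> B i})" using Peq by auto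
    then show ?thesis by (simp add: closed_INT closed_halfspace_le)
  qed
  have front: "\<exists>i\<in>I. A i \<bullet> q = B i" if q: "q \<in> frontier P" for q
  proof (rule ccontr)
    assume nq: "\<not> (\<exists>i\<in>I. A i \<bullet> q = B i)"
    have qP: "q \<in> P" using q clP frontier_subset_closed by blast
    let ?U = "\<Inter>i\<in>I. {y. A i \<bullet> y < B i}"
    have "open ?U" using fin by (simp add: open_INT open_halfspace_lt)
    moreover have "?U \<subseteq> P" using Peq by (auto simp: less_imp_le)
    moreover have "q \<in> ?U" using qP nq Peq by fastforce
    ultimately have "q \<in> interior P" by (meson interior_maximal interior_open subsetD)
    then show False using q by (simp add: frontier_def)
  qed
  have cP: "c \<in> P" using cb xpos by auto
  have PU: "P \<noteq> UNIV" using maxr[of c "x+1"] by auto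
  have frne: "frontier P \<noteq> {}" using frontier_not_empty[OF _ PU] cP by blast
  show F1: "\<And>t p. G t p \<Longrightarrow> t \<le> infdist p (frontier P)"
  proof -
    fix t p assume G: "G t p"
    show "t \<le> infdist p (frontier P)"
      unfolding infdist_notempty[OF frne]
    proof (rule cINF_greatest[OF frne])
      fix q assume "q \<in> frontier P"
      then obtain i where i: "i \<in> I" "A i \<bullet> q = B i" using front by blast
      have "t \<le> B i - A i \<bullet> p" using G i G_def by fastforce
      also have "\<dots> = A i \<bullet> (q - p)" using i by (simp add: inner_diff_right)
      also have "\<dots> \<le> norm (A i) * norm (q - p)" by (rule norm_cauchy_schwarz)
      also have "\<dots> = dist p q" using nA[OF i(1)] by (simp add: dist_norm norm_minus_commute)
      finally show "t \<le> dist p q" .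
    qed
  qed
  show F2: "\<And>t p. p \<in> P \<Longrightarrow> t \<le> infdist p (frontier P) \<Longrightarrow> G t p"
  proof -
    fix t p assume pP: "p \<in> P" and tle: "t \<le> infdist p (frontier P)"
    show "G t p" unfolding G_def
    proof (rule ballI, rule ccontr)
      fix i assume i: "i \<in> I" and ng: "\<not> A i \<bullet> p + t \<le> B i"
      have Ap: "A i \<bullet> p \<le> B i" using pP i Peq by blast
      define t' where "t' = (B i - A i \<bullet> p + t) / 2"
      have t'1: "t' > B i - A i \<bullet> p" and t'2: "t' < t" and t'0: "t' \<ge> 0"
        using ng Ap by (auto simp: t'_def)
      define q where "q = p + t' *\<^sub>R A i"
      have "A i \<bullet> A i = 1" using nA[OF i] by (metis norm_eq_sqrt_inner real_sqrt_eq_1_iff)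
      then have "A i \<bullet> q = A i \<bullet> p + t'" by (simp add: q_def inner_add_right)
      then have qP: "q \<notin> P" using t'1 i Peq by force
      have "closed_segment p q \<inter> frontier P \<noteq> {}"
        by (rule connected_Int_frontier) (use pP qP in auto)
      then obtain z where z: "z \<in> closed_segment p q" "z \<in> frontier P" by blast
      have "dist z p \<le> dist p q" using dist_in_closed_segment[OF z(1)] by blast
      also have "\<dots> = t'" using nA[OF i] t'0 by (simp add: q_def dist_norm)
      finally have "infdist p (frontier P) \<le> t'"
        using infdist_le[OF z(2), of p] by (simp add: dist_commute)
      then show False using tle t'2 by linarith
    qed
  qed
qed



lemma core:
  fixes P :: "'a::euclidean_space set" and A :: "'i \<Rightarrow> 'a" and B :: "'i \<Rightarrow> real"
  assumes fin: "finite I"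
    and Peq: "P = {y. \<forall>i\<in>I. A i \<bullet> y \<le> B i}"
    and nA: "\<And>i. i \<in> I \<Longrightarrow> norm (A i) = 1"
    and tan: "\<And>i. i \<in> I \<Longrightarrow> B i - A i \<bullet> c = x"
    and xpos: "x > 0"
    and cb: "cball c x \<subseteq> P"
    and maxr: "\<And>c' r. cball c' r \<subseteq> P \<Longrightarrow> r \<le> x"
    and n1: "n \<ge> 1"
  shows "Disp n P = 2 * x * DP n P / (x + DP n P)"
proof -
  define G where "G t p \<longleftrightarrow> (\<forall>i\<in>I. A i \<bullet> p + t \<le> B i)" for t p
  have nA0: "\<forall>i\<in>I. norm (A i) = 1" using nA by blast
  have tan0: "\<forall>i\<in>I. B i - A i \<bullet> c = x" using tan by blast
  have maxr0: "\<forall>c' r. cball c' r \<subseteq> P \<longrightarrow> r \<le> x" using maxr by blast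
  note g = geom[of I P A B c x G, OF fin Peq nA0 tan0 xpos cb maxr0 G_def]
  define fr where "fr = frontier P"
  define M where "M X = {infdist (X i) fr | i. i < n} \<union> {dist (X i) (X j) | i j. i < n \<and> j < n \<and> i \<noteq> j}"
    for X :: "nat \<Rightarrow> 'a"
  define V where "V = {Min (M X) | X. \<forall>i<n. X i \<in> P}"
  define Q where "Q r = {enat (card C) | C. finite C \<and> (\<forall>c\<in>C. cball c r \<subseteq> P)
                     \<and> (\<forall>c\<in>C. \<forall>d\<in>C. c \<noteq> d \<longrightarrow> ball c r \<inter> ball d r = {})}" for r
  define S where "S = {r. r \<ge> 0 \<and> Pack r P \<ge> enat n}"
  have DispV: "Disp n P = Sup V" unfolding Disp_def V_def M_def fr_def by simp
  have DPS: "DP n P = Sup S" unfolding DP_def S_def by simp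
  have PackQ: "Pack r P = Sup (Q r)" for r unfolding Pack_def Q_def by simp
  have finM: "finite (M X)" for X
  proof -
    have "{dist (X i) (X j) | i j. i < n \<and> j < n \<and> i \<noteq> j}
          \<subseteq> (\<lambda>(i,j). dist (X i) (X j)) ` ({..<n} \<times> {..<n})" by auto
    then have "finite {dist (X i) (X j) | i j. i < n \<and> j < n \<and> i \<noteq> j}"
      by (rule finite_subset) simp
    moreover have "finite {infdist (X i) fr | i. i < n}" by simp
    ultimately show ?thesis unfolding M_def by simp
  qed
  have neM: "M X \<noteq> {}" for X using n1 unfolding M_def by (auto intro: exI[of _ 0])
  have MinM_ge: "d \<le> Min (M X)" if "\<And>i. i < n \<Longrightarrow> d \<le> infdist (X i) fr"
      "\<And>i j. i < n \<Longrightarrow> j < n \<Longrightarrow> i \<noteq> j \<Longrightarrow> d \<le> dist (X i) (X j)" for d X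
    unfolding Min_ge_iff[OF finM neM] using that by (auto simp: M_def)
  have MinM_inf: "Min (M X) \<le> infdist (X i) fr" if "i < n" for X i
    using that finM unfolding M_def by (intro Min_le) auto
  have MinM_dist: "Min (M X) \<le> dist (X i) (X j)" if "i < n" "j < n" "i \<noteq> j" for X i j
    using that finM unfolding M_def by (intro Min_le) blast+
  have cP: "c \<in> P" using cb xpos by auto
  have infx: "infdist p fr \<le> x" if "p \<in> P" for p
  proof -
    have "G (infdist p fr) p" using g(6)[OF that] by (simp add: fr_def)
    then show ?thesis using g(2) maxr by blast
  qed
  have Vbdd: "bdd_above V"
    unfolding V_def
    by (rule bdd_aboveI[of _ x]) (use n1 MinM_inf infx in \<open>force intro: order_trans\<close>)
  have Vne: "V \<noteq> {}" unfolding V_def using cP by auto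
  have Dle: "Sup V \<le> x" using Vne unfolding V_def
    by (rule cSup_least) (use n1 MinM_inf infx in \<open>force intro: order_trans\<close>)
  have getC: "\<exists>C. finite C \<and> card C \<ge> n \<and> (\<forall>c\<in>C. cball c r \<subseteq> P)
                     \<and> (\<forall>c\<in>C. \<forall>d\<in>C. c \<noteq> d \<longrightarrow> ball c r \<inter> ball d r = {})" if "r \<in> S" for r
  proof (rule ccontr)
    assume nC: "\<not> ?thesis"
    have "Sup (Q r) \<le> enat (n - 1)"
    proof (rule Sup_least)
      fix e assume "e \<in> Q r"
      then obtain C where "e = enat (card C)" "finite C" "\<forall>c\<in>C. cball c r \<subseteq> P"
        "\<forall>c\<in>C. \<forall>d\<in>C. c \<noteq> d \<longrightarrow> ball c r \<inter> ball d r = {}" unfolding Q_def by blast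
      with nC have "\<not> card C \<ge> n" by blast
      then have "card C \<le> n - 1" by simp
      then show "e \<le> enat (n - 1)" using \<open>e = _\<close> by simp
    qed
    moreover have "enat n \<le> Sup (Q r)" using that PackQ S_def by auto
    ultimately show False using n1 by (metis enat_ord_simps(1) order_trans diff_less less_numeral_extra(1) not_le le_less_trans zero_less_one order.strict_trans1)
  qed
  have Sx: "r \<le> x" if rS: "r \<in> S" for r
  proof -
    obtain C where "finite C" "card C \<ge> n" "\<forall>c\<in>C. cball c r \<subseteq> P" using getC[OF rS] by blast
    moreover then have "C \<noteq> {}" using n1 by auto
    ultimately show ?thesis using maxr by blast
  qed
  have Sbdd: "bdd_above S" using Sx by (rule bdd_aboveI)
  have packS: "r \<in> S" if "r \<ge> 0" "finite C" "card C = n" "\<forall>c\<in>C. cball c r \<subseteq> P"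
      "\<forall>c\<in>C. \<forall>d\<in>C. c \<noteq> d \<longrightarrow> ball c r \<inter> ball d r = {}" for r C
  proof -
    have "enat (card C) \<in> Q r" using that unfolding Q_def by blast
    then have "enat n \<le> Sup (Q r)" using that by (metis Sup_upper)
    then show ?thesis using that PackQ S_def by auto
  qed
  have Sne: "0 \<in> S"
  proof -
    obtain u :: 'a where u: "u \<in> Basis" using nonempty_Basis by blast
    define Y where "Y i = c + (real i / real n * x) *\<^sub>R u" for i
    have injY: "inj_on Y {..<n}"
    proof (rule inj_onI)
      fix i j assume "Y i = Y j"
      then have "(real i / real n * x) *\<^sub>R u = (real j / real n * x) *\<^sub>R u" by (simp add: Y_def)
      then have "real i / real n * x = real j / real n * x" using u nonzero_Basis by (metis scaleR_cancel_right)
      then show "i = j" using xpos n1 u by (auto simp: field_simps nonzero_Basis)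
    qed
    have "Y i \<in> P" if "i < n" for i
    proof -
      have "real i / real n \<le> 1" using that by simp
      then have "real i / real n * x \<le> x" using mult_right_mono[of "real i / real n" 1 x] xpos by simp
      then have "Y i \<in> cball c x" using u xpos by (simp add: Y_def dist_norm)
      then show ?thesis using cb by blast
    qed
    then show ?thesis
      by (intro packS[of 0 "Y ` {..<n}"]) (auto simp: card_image[OF injY])
  qed
  have Rge: "0 \<le> Sup S" using Sne Sbdd by (meson cSup_upper)
  have Rle: "Sup S \<le> x" using Sne Sx by (intro cSup_least) auto
  have A: "Sup V \<le> 2 * x * Sup S / (x + Sup S)"
  proof (rule cSup_least[OF Vne])
    fix d assume "d \<in> V"
    then obtain X where X: "\<And>i. i < n \<Longrightarrow> X i \<in> P" and dX: "d = Min (M X)" unfolding V_def by blast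
    have phiR: "0 \<le> 2 * x * Sup S / (x + Sup S)" using Rge xpos by simp
    show "d \<le> 2 * x * Sup S / (x + Sup S)"
    proof (cases "d \<le> 0")
      case True then show ?thesis using phiR by linarith
    next
      case False
      then have dpos: "d > 0" by simp
      have dx: "d \<le> x" using dX MinM_inf[of 0 X] n1 infx[OF X[of 0]] by linarith
      define r where "r = d * x / (2 * x - d)"
      have rpos: "r > 0" using dpos dx xpos by (simp add: r_def)
      define l where "l = (x + r) / x"
      have lpos: "l > 0" using rpos xpos by (simp add: l_def)
      have key: "d * (x + r) = 2 * x * r" using dx xpos dpos
        by (simp add: r_def field_simps)
      have ld: "l * d = 2 * r" using key xpos by (simp add: l_def field_simps)
      define Y where "Y i = c + l *\<^sub>R (X i - c)" for i
      have GY: "G r (Y i)" if i: "i < n" for i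
      proof -
        have "d \<le> infdist (X i) fr" using MinM_inf[OF i] dX by simp
        then have "G d (X i)" using g(6)[OF X[OF i]] by (simp add: fr_def)
        then have G1: "G (l * d + (1 - l) * x) (Y i)" using g(4) lpos unfolding Y_def by simp
        have "l * d + (1 - l) * x = r" using ld xpos by (simp add: l_def field_simps)
        then show ?thesis using G1 by simp
      qed
      have dY: "2 * r \<le> dist (Y i) (Y j)" if "i < n" "j < n" "i \<noteq> j" for i j
      proof -
        have "dist (Y i) (Y j) = l * dist (X i) (X j)" using lpos
          by (simp add: Y_def dist_norm scaleR_diff_right[symmetric])
        moreover have "d \<le> dist (X i) (X j)" using MinM_dist[OF that] dX by simp
        ultimately show ?thesis using mult_left_mono[of d "dist (X i) (X j)" l] ld lpos by simp
      qed
      have injY: "inj_on Y {..<n}"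
      proof (rule inj_onI, rule ccontr)
        fix i j assume "i \<in> {..<n}" "j \<in> {..<n}" "Y i = Y j" "i \<noteq> j"
        then have "2 * r \<le> dist (Y i) (Y j)" using dY by blast
        then show False using rpos \<open>Y i = Y j\<close> by simp
      qed
      have "r \<in> S"
      proof (rule packS[of r "Y ` {..<n}"])
        show "0 \<le> r" using rpos by simp
        show "finite (Y ` {..<n})" by simp
        show "card (Y ` {..<n}) = n" by (simp add: card_image[OF injY])
        show "\<forall>c\<in>Y ` {..<n}. cball c r \<subseteq> P" using GY g(2) by auto
        show "\<forall>c\<in>Y ` {..<n}. \<forall>d\<in>Y ` {..<n}. c \<noteq> d \<longrightarrow> ball c r \<inter> ball d r = {}"
          using dY dist_disj by blast
      qed
      then have rR: "r \<le> Sup S" using Sbdd by (meson cSup_upper)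
      have "d = 2 * x * r / (x + r)" using key rpos xpos by (simp add: field_simps)
      also have "\<dots> \<le> 2 * x * Sup S / (x + Sup S)"
      proof -
        have "2*x*x*r \<le> 2*x*x*Sup S" using rR xpos by (simp add: mult_left_mono)
        then have "2*x*r*(x+Sup S) \<le> 2*x*Sup S*(x+r)" by (simp add: algebra_simps)
        then show ?thesis using rpos xpos Rge by (simp add: divide_simps)
      qed
      finally show ?thesis .
    qed
  qed
  have B: "Sup S \<le> Sup V * x / (2 * x - Sup V)"
  proof (rule cSup_least)
    show "S \<noteq> {}" using Sne by blast
    fix r assume rS: "r \<in> S"
    then have r0: "r \<ge> 0" by (simp add: S_def)
    obtain C where C: "finite C" "card C \<ge> n" "\<forall>c\<in>C. cball c r \<subseteq> P"
       "\<forall>c\<in>C. \<forall>d\<in>C. c \<noteq> d \<longrightarrow> ball c r \<inter> ball d r = {}" using getC[OF rS] by blast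
    obtain Y where Y: "Y ` {..<n} \<subseteq> C" "inj_on Y {..<n}"
      using card_le_inj[of "{..<n}" C] C by auto
    define mu where "mu = x / (x + r)"
    have mupos: "mu > 0" using xpos r0 by (simp add: mu_def)
    define phi where "phi = 2 * x * r / (x + r)"
    have phi0: "phi \<ge> 0" using xpos r0 by (simp add: phi_def)
    define X where "X i = c + mu *\<^sub>R (Y i - c)" for i
    have GX: "G phi (X i)" if i: "i < n" for i
    proof -
      have "G r (Y i)" using g(3) C(3) Y(1) i r0 by blast
      then have G1: "G (mu * r + (1 - mu) * x) (X i)" using g(4) mupos unfolding X_def by simp
      have h: "x + r > 0" using xpos r0 by simp
      have m1: "1 - mu = r/(x+r)" unfolding mu_def using h by (simp add: field_simps)
      have "mu * r + (1 - mu) * x = x*r/(x+r) + r*x/(x+r)" unfolding m1 by (simp add: mu_def)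
      also have "\<dots> = (x*r + r*x)/(x+r)" by (simp add: add_divide_distrib)
      also have "\<dots> = phi" unfolding phi_def by simp
      finally have "mu * r + (1 - mu) * x = phi" .
      then show ?thesis using G1 by simp
    qed
    have "phi \<le> Min (M X)"
    proof (rule MinM_ge)
      fix i assume "i < n"
      then show "phi \<le> infdist (X i) fr" using g(5) GX by (simp add: fr_def)
    next
      fix i j assume ij: "i < n" "j < n" "i \<noteq> j"
      then have "Y i \<noteq> Y j" using Y(2) by (meson inj_on_def lessThan_iff)
      then have "2 * r \<le> dist (Y i) (Y j)" using C(4) Y(1) ij r0 disj_dist by blast
      moreover have "dist (X i) (X j) = mu * dist (Y i) (Y j)" using mupos
        by (simp add: X_def dist_norm scaleR_diff_right[symmetric])
      moreover have "phi = mu * (2 * r)" by (simp add: phi_def mu_def)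
      ultimately show "phi \<le> dist (X i) (X j)" using mupos mult_left_mono[of "2*r" "dist (Y i) (Y j)" mu] by simp
    qed
    moreover have "Min (M X) \<in> V" unfolding V_def using GX g(1) phi0 by blast
    ultimately have "phi \<le> Sup V" using Vbdd by (meson cSup_upper order_trans)
    then have "2 * x * r \<le> Sup V * (x + r)" using xpos r0 by (simp add: phi_def divide_simps)
    then have "r * (2 * x - Sup V) \<le> Sup V * x" by (simp add: algebra_simps)
    then show "r \<le> Sup V * x / (2 * x - Sup V)" using Dle xpos by (simp add: divide_simps mult.commute)
  qed
  have B': "2 * x * Sup S / (x + Sup S) \<le> Sup V"
  proof -
    have "Sup S * (2 * x - Sup V) \<le> Sup V * x" using B Dle xpos by (simp add: divide_simps)
    then have "2 * x * Sup S \<le> Sup V * (x + Sup S)" by (simp add: algebra_simps)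
    then show ?thesis using Rge xpos by (simp add: divide_simps)
  qed
  show ?thesis using A B' DispV DPS by simp
qed



theorem claim3:
  fixes P :: "'a::euclidean_space set" and x :: real and n :: nat
  assumes "polytope P" and "aff_dim P = int DIM('a)"
    and "has_insphere P x"
    and "n \<ge> 1"
  shows "Disp n P = 2 * x * DP n P / (x + DP n P)"
proof -
  obtain c where cb: "cball c x \<subseteq> P" and maxr: "\<forall>c' r. cball c' r \<subseteq> P \<longrightarrow> r \<le> x"
    and tg: "\<forall>F. F facet_of P \<longrightarrow> cball c x \<inter> F \<noteq> {}"
    using assms(3) unfolding has_insphere_def by blast
  have ph: "polyhedron P" using assms(1) by (rule polytope_imp_polyhedron)
  have ah: "affine hull P = UNIV" using assms(2) aff_dim_eq_full by blast
  obtain F where finF: "finite F" and seq: "P = affine hull P \<inter> \<Inter>F"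
             and faces: "\<And>h. h \<in> F \<Longrightarrow> \<exists>a b. a \<noteq> 0 \<and> h = {x. a \<bullet> x \<le> b}"
             and min: "\<And>F'. F' \<subset> F \<Longrightarrow> P \<subset> (affine hull P) \<inter> \<Inter>F'"
    using ph by (simp add: polyhedron_Int_affine_minimal) meson
  then obtain a b where ab: "\<And>h. h \<in> F \<Longrightarrow> a h \<noteq> 0 \<and> h = {x. a h \<bullet> x \<le> b h}"
    by metis
  have facet: "(P \<inter> {y. a h \<bullet> y = b h}) facet_of P" if "h \<in> F" for h
    using facet_of_polyhedron_explicit[OF finF seq ab min] that by blast
  have Pne: "P \<noteq> {}" using assms(2) by auto
  have "interior P = rel_interior P" using ah by (simp add: rel_interior_interior)
  moreover have "rel_interior P \<noteq> {}"
    using Pne polyhedron_imp_convex[OF ph] rel_interior_eq_empty by blast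
  ultimately obtain p where "p \<in> interior P" by auto
  then obtain e where e: "e > 0" "ball p e \<subseteq> P" using mem_interior by blast
  have "cball p (e/2) \<subseteq> ball p e" using e by (simp add: cball_subset_ball_iff)
  then have "cball p (e/2) \<subseteq> P" using e by blast
  then have xpos: "x > 0" using maxr e by fastforce
  define A where "A h = a h /\<^sub>R norm (a h)" for h
  define B where "B h = b h / norm (a h)" for h
  have Peq: "P = {y. \<forall>h\<in>F. A h \<bullet> y \<le> B h}"
  proof -
    have "P = \<Inter>F" using seq ah by simp
    also have "\<dots> = {y. \<forall>h\<in>F. a h \<bullet> y \<le> b h}" using ab by blast
    also have "\<dots> = {y. \<forall>h\<in>F. A h \<bullet> y \<le> B h}"
    proof -
      have "a h \<bullet> y \<le> b h \<longleftrightarrow> A h \<bullet> y \<le> B h" if "h \<in> F" for h y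
      proof -
        have "norm (a h) > 0" using ab[OF that] by simp
        then show ?thesis by (simp add: A_def B_def divide_le_cancel field_simps)
      qed
      then show ?thesis by blast
    qed
    finally show ?thesis .
  qed
  have nA: "\<forall>h\<in>F. norm (A h) = 1" using ab by (simp add: A_def)
  have AA: "A h \<bullet> A h = 1" if "h \<in> F" for h
    using nA that by (metis norm_eq_sqrt_inner real_sqrt_eq_1_iff)
  have tan: "\<forall>h\<in>F. B h - A h \<bullet> c = x"
  proof
    fix h assume h: "h \<in> F"
    have "c + x *\<^sub>R A h \<in> cball c x" using nA h xpos by (simp add: dist_norm)
    then have "A h \<bullet> (c + x *\<^sub>R A h) \<le> B h" using cb Peq h by blast
    then have ge: "x \<le> B h - A h \<bullet> c" using AA[OF h] by (simp add: inner_add_right)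
    obtain z where z: "z \<in> cball c x" "z \<in> P" "a h \<bullet> z = b h" using tg facet[OF h] by blast
    have "norm (a h) > 0" using ab[OF h] by simp
    then have "A h \<bullet> z = B h" using z(3) by (simp add: A_def B_def divide_inverse mult.commute)
    then have "B h - A h \<bullet> c = A h \<bullet> (z - c)" by (simp add: inner_diff_right)
    also have "\<dots> \<le> norm (A h) * norm (z - c)" by (rule norm_cauchy_schwarz)
    also have "\<dots> \<le> x" using nA h z(1) by (simp add: dist_norm norm_minus_commute)
    finally show "B h - A h \<bullet> c = x" using ge by linarith
  qed
  show ?thesis
    by (rule core[OF finF Peq _ _ xpos cb _ assms(4)]) (use nA tan maxr in auto)
qed

end
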